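(* Let $g:\mathbb{R}^d\to\mathbb{R}$ be $p$ times differentiable ($p\ge1$) with $\nabla^pg$ being $L_p$-Lipschitz, and let $L\ge0$. Define $\mathcal T(x)$ to be a minimizer (assumed to exist) of $y\mapsto g_p(y;x)+\frac{L_p+L}{p!}\|y-x\|^{p+1}$, where $g_p(y;x)$ is the $p$-th order Taylor approximation of $g$ about $x$ evaluated at $y$. Then $\mathcal T$ is a $\big((1+p)^{-1}(1+L/L_p)^{-1},\,0\big)$-approximate $\omega$-proximal step oracle for $g$ with $\omega(s)=\frac{(L_p+L)(p+1)}{p!}s^{p-1}$.
   Context: An $(\alpha,\delta)$-approximate $\omega$-proximal step oracle for $g$ is a procedure that, queried at any $x\in\mathbb{R}^d$, returns some $y$ with $\|\nabla g(y)+\omega(\|y-x\|)(y-x)\|\le\alpha\,\omega(\|y-x\|)\|y-x\|+\delta$. *)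

theory Defs
  imports "HOL-Analysis.Analysis"
begin

text \<open>Higher derivatives of g : R^d -> R are represented by a family D, where
 D k x h is the k-th Frechet derivative of g at x applied to the vectors h 0, ..., h (k-1).\<close>
definition higher_derivs ::
  "('a::euclidean_space \<Rightarrow> real) \<Rightarrow> nat \<Rightarrow> (nat \<Rightarrow> 'a \<Rightarrow> (nat \<Rightarrow> 'a) \<Rightarrow> real) \<Rightarrow> bool" where
  "higher_derivs g p D \<longleftrightarrow>
     (\<forall>x h. D 0 x h = g x) \<and>
     (\<forall>k<p. \<forall>x h. ((\<lambda>z. D k z h) has_derivative (\<lambda>v. D (Suc k) x (h(k := v)))) (at x))"

definition pth_deriv_lipschitz ::
  "nat \<Rightarrow> (nat \<Rightarrow> 'a::euclidean_space \<Rightarrow> (nat \<Rightarrow> 'a) \<Rightarrow> real) \<Rightarrow> real \<Rightarrow> bool" where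
  "pth_deriv_lipschitz p D Lp \<longleftrightarrow>
     (\<forall>x y h. \<bar>D p x h - D p y h\<bar> \<le> Lp * norm (x - y) * (\<Prod>i<p. norm (h i)))"

definition taylor_approx ::
  "nat \<Rightarrow> (nat \<Rightarrow> 'a::euclidean_space \<Rightarrow> (nat \<Rightarrow> 'a) \<Rightarrow> real) \<Rightarrow> 'a \<Rightarrow> 'a \<Rightarrow> real" where
  "taylor_approx p D y x = (\<Sum>k\<le>p. D k x (\<lambda>_. y - x) / fact k)"

definition gradient :: "('a::euclidean_space \<Rightarrow> real) \<Rightarrow> 'a \<Rightarrow> 'a" where
  "gradient g y = (SOME v. (g has_derivative (\<lambda>h. v \<bullet> h)) (at y))"

definition approx_prox_oracle ::
  "('a::euclidean_space \<Rightarrow> real) \<Rightarrow> (real \<Rightarrow> real) \<Rightarrow> real \<Rightarrow> real \<Rightarrow> ('a \<Rightarrow> 'a) \<Rightarrow> bool" where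
  "approx_prox_oracle g \<omega> \<alpha> \<delta> T \<longleftrightarrow>
     (\<forall>x. let y = T x in
        norm (gradient g y + \<omega> (norm (y - x)) *\<^sub>R (y - x))
          \<le> \<alpha> * \<omega> (norm (y - x)) * norm (y - x) + \<delta>)"

end

theory Submission
  imports Defs
begin


lemma dpow: "((\<lambda>t::real. c * t ^ Suc n / fact (Suc n)) has_real_derivative c * t ^ n / fact n) (at t)"
proof -
  have "((\<lambda>t::real. t ^ Suc n) has_real_derivative real (Suc n) * t ^ n) (at t)"
    using DERIV_pow[of "Suc n" t UNIV] by simp
  then have "((\<lambda>t::real. c * t ^ Suc n / fact (Suc n)) has_real_derivative c * (real (Suc n) * t ^ n) / fact (Suc n)) (at t)"
    by (intro DERIV_cdivide DERIV_cmult)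
  moreover have "c * (real (Suc n) * t ^ n) / fact (Suc n) = c * t ^ n / fact n"
  proof -
    have "c * (real (Suc n) * t ^ n) / fact (Suc n) = (real (Suc n) * (c*t ^ n)) / (real (Suc n) * fact n)"
      by (simp add: fact_Suc mult_ac del: of_nat_Suc)
    also have "\<dots> = c*t^n/fact n" by (rule mult_divide_mult_cancel_left) simp
    finally show ?thesis .
  qed
  ultimately show ?thesis by simp
qed

lemma int_step:
  fixes F F1 :: "real \<Rightarrow> real"
  assumes "F 0 = 0" and d: "\<And>s. (F has_real_derivative F1 s) (at s)"
    and b: "\<And>s. 0 \<le> s \<Longrightarrow> s \<le> 1 \<Longrightarrow> \<bar>F1 s\<bar> \<le> K * s ^ n / fact n"
    and s: "0 \<le> s" "s \<le> 1"
  shows "\<bar>F s\<bar> \<le> K * s ^ Suc n / fact (Suc n)"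
proof -
  have dP: "((\<lambda>t. K * t ^ Suc n / fact (Suc n)) has_real_derivative K * t ^ n / fact n) (at t)" for t
    by (rule dpow)
  have "(\<lambda>t. K * t ^ Suc n / fact (Suc n) - F t) 0 \<le> (\<lambda>t. K * t ^ Suc n / fact (Suc n) - F t) s"
    apply (rule DERIV_nonneg_imp_increasing_open[OF s(1)])
    subgoal for t apply (rule exI[of _ "K * t ^ n / fact n - F1 t"])
      by (intro conjI DERIV_diff dP d) (use b[of t] s in auto)
    apply (rule continuous_on_diff)
     apply (intro continuous_intros) apply simp
    apply (rule continuous_at_imp_continuous_on) using d DERIV_isCont by blast
  moreover
  have "(\<lambda>t. K * t ^ Suc n / fact (Suc n) + F t) 0 \<le> (\<lambda>t. K * t ^ Suc n / fact (Suc n) + F t) s"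
    apply (rule DERIV_nonneg_imp_increasing_open[OF s(1)])
    subgoal for t apply (rule exI[of _ "K * t ^ n / fact n + F1 t"])
      by (intro conjI DERIV_add dP d) (use b[of t] s in auto)
    apply (rule continuous_on_add)
     apply (intro continuous_intros) apply simp
    apply (rule continuous_at_imp_continuous_on) using d DERIV_isCont by blast
  ultimately show ?thesis using assms(1) by auto
qed

lemma taylor_rem:
  fixes f :: "nat \<Rightarrow> real \<Rightarrow> real"
  assumes "\<And>j s. j < n \<Longrightarrow> (f j has_real_derivative f (Suc j) s) (at s)"
    and "\<And>s. 0 \<le> s \<Longrightarrow> s \<le> 1 \<Longrightarrow> \<bar>f n s - f n 0\<bar> \<le> K * s"
    and "0 \<le> s" "s \<le> 1"
  shows "\<bar>f 0 s - (\<Sum>j\<le>n. f j 0 * s ^ j / fact j)\<bar> \<le> K * s ^ Suc n / fact (Suc n)"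
  using assms
proof (induction n arbitrary: f s)
  case 0
  then show ?case by simp
next
  case (Suc n)
  have IH: "\<bar>f 1 t - (\<Sum>j\<le>n. f (Suc j) 0 * t ^ j / fact j)\<bar> \<le> K * t ^ Suc n / fact (Suc n)"
    if "0 \<le> t" "t \<le> 1" for t
    using Suc.IH[of "\<lambda>j. f (Suc j)" t] Suc.prems that by auto
  define F where "F t = f 0 t - (\<Sum>j\<le>Suc n. f j 0 * t ^ j / fact j)" for t
  define F1 where "F1 t = f 1 t - (\<Sum>j\<le>n. f (Suc j) 0 * t ^ j / fact j)" for t
  have Feq: "F t = f 0 t - f 0 0 - (\<Sum>j\<le>n. f (Suc j) 0 * t ^ Suc j / fact (Suc j))" for t
    unfolding F_def by (simp add: sum.atMost_Suc_shift del: sum.atMost_Suc)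
  have dF: "(F has_real_derivative F1 t) (at t)" for t
  proof -
    have "(F has_real_derivative f 1 t - 0 - (\<Sum>j\<le>n. f (Suc j) 0 * t ^ j / fact j)) (at t)"
      unfolding Feq[abs_def]
      apply (intro DERIV_diff DERIV_sum DERIV_const)
      using Suc.prems(1)[of 0 t] apply simp
      apply (rule dpow) done
    then show ?thesis unfolding F1_def by simp
  qed
  have "\<bar>F s\<bar> \<le> K * s ^ Suc (Suc n) / fact (Suc (Suc n))"
    by (rule int_step[of F F1]) (use dF IH Suc.prems in \<open>auto simp: F_def F1_def\<close>)
  then show ?case unfolding F_def .
qed



lemma zero_if_small:
  fixes d C :: real
  assumes "C \<ge> 0" "\<And>e. e > 0 \<Longrightarrow> \<bar>d\<bar> \<le> e * C"
  shows "d = 0"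
proof (rule ccontr)
  assume "d \<noteq> 0"
  then have "\<bar>d\<bar> > 0" by simp
  have "\<bar>d\<bar> \<le> (\<bar>d\<bar> / (2 * (C + 1))) * C" using assms(2)[of "\<bar>d\<bar> / (2 * (C + 1))"] \<open>\<bar>d\<bar> > 0\<close> assms(1) by simp
  also have "\<dots> < \<bar>d\<bar>" using \<open>\<bar>d\<bar> > 0\<close> assms(1)
    by (simp add: field_simps, smt (verit) mult_nonneg_nonneg abs_ge_zero)
  finally show False by simp
qed

lemma sym2_est:
  fixes f :: "'a::real_normed_vector \<Rightarrow> real"
  assumes df: "\<And>z. (f has_derivative f' z) (at z)"
    and dB: "((\<lambda>z. f' z a) has_derivative B) (at x)"
    and e: "e > 0"
  shows "\<exists>d>0. \<forall>s. 0 < s \<and> s < d \<longrightarrow>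
     \<bar>(f (x + s *\<^sub>R a + s *\<^sub>R b) - f (x + s *\<^sub>R a) - f (x + s *\<^sub>R b) + f x) - s\<^sup>2 * B b\<bar>
        \<le> e * s\<^sup>2 * (2 * norm a + norm b)"
proof -
  let ?G = "\<lambda>z. f' z a"
  have blB: "linear B" using dB by (rule has_derivative_linear)
  from dB e obtain d0 where d0: "d0 > 0"
    and d0b: "\<And>y. norm (y - x) < d0 \<Longrightarrow> norm (?G y - ?G x - B (y - x)) \<le> e * norm (y - x)"
    unfolding has_derivative_at_alt by blast
  define d where "d = d0 / (norm a + norm b + 1)"
  have pos: "norm a + norm b + 1 > 0" by (simp add: add_nonneg_pos)
  have "d > 0" using d0 by (simp add: d_def add_nonneg_pos)
  moreover have "\<bar>(f (x + s *\<^sub>R a + s *\<^sub>R b) - f (x + s *\<^sub>R a) - f (x + s *\<^sub>R b) + f x) - s\<^sup>2 * B b\<bar>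
        \<le> e * s\<^sup>2 * (2 * norm a + norm b)" if s: "0 < s" "s < d" for s
  proof -
    have sab: "s * (norm a + norm b) < d0"
    proof -
      have "s * (norm a + norm b) \<le> s * (norm a + norm b + 1)" using s by simp
      also have "\<dots> < d * (norm a + norm b + 1)"
        using s by (intro mult_strict_right_mono) (auto simp: add_nonneg_pos)
      also have "\<dots> = d0" using pos by (simp add: d_def)
      finally show ?thesis .
    qed
    define \<phi> where "\<phi> t = f (x + t *\<^sub>R a + s *\<^sub>R b) - f (x + t *\<^sub>R a)" for t
    have lin: "f' z (t *\<^sub>R a) = t * ?G z" for z t
      using linear_scale[OF has_derivative_linear[OF df[of z]], of t a] by simp
    have dphi: "(\<phi> has_real_derivative (?G (x + t *\<^sub>R a + s *\<^sub>R b) - ?G (x + t *\<^sub>R a))) (at t)" for t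
    proof -
      have h1: "((\<lambda>t. x + t *\<^sub>R a + s *\<^sub>R b) has_derivative (\<lambda>h. h *\<^sub>R a)) (at t)"
        by (auto intro!: derivative_eq_intros)
      have h2: "((\<lambda>t. x + t *\<^sub>R a) has_derivative (\<lambda>h. h *\<^sub>R a)) (at t)"
        by (auto intro!: derivative_eq_intros)
      have "(\<phi> has_derivative (\<lambda>h. f' (x + t *\<^sub>R a + s *\<^sub>R b) (h *\<^sub>R a) - f' (x + t *\<^sub>R a) (h *\<^sub>R a))) (at t)"
        unfolding \<phi>_def[abs_def]
        by (intro has_derivative_diff has_derivative_compose[OF h1 df] has_derivative_compose[OF h2 df])
      then show ?thesis unfolding has_field_derivative_def lin
        by (rule has_derivative_eq_rhs) (auto simp: fun_eq_iff algebra_simps)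
    qed
    obtain \<xi> where \<xi>: "0 < \<xi>" "\<xi> < s" and mv: "\<phi> s - \<phi> 0 = (s - 0) * (?G (x + \<xi> *\<^sub>R a + s *\<^sub>R b) - ?G (x + \<xi> *\<^sub>R a))"
      using MVT2[of 0 s \<phi>, OF s(1) dphi] by blast
    define z1 where "z1 = x + \<xi> *\<^sub>R a + s *\<^sub>R b"
    define z2 where "z2 = x + \<xi> *\<^sub>R a"
    have n1: "norm (z1 - x) \<le> s * (norm a + norm b)"
    proof -
      have "norm (z1 - x) \<le> norm (\<xi> *\<^sub>R a) + norm (s *\<^sub>R b)" unfolding z1_def
        by (metis add_diff_cancel_left' add.assoc norm_triangle_ineq)
      also have "\<dots> \<le> s * norm a + s * norm b" using \<xi> s
        by (auto intro!: add_mono mult_right_mono)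
      finally show ?thesis by (simp add: algebra_simps)
    qed
    have n2: "norm (z2 - x) \<le> s * norm a"
      unfolding z2_def using \<xi> by (auto intro!: mult_right_mono)
    have n2': "s * norm a \<le> s * (norm a + norm b)" using s by (simp add: mult_left_mono)
    have e1: "\<bar>?G z1 - ?G x - B (z1 - x)\<bar> \<le> e * (s * (norm a + norm b))"
      using d0b[of z1] n1 sab e by (auto intro: order_trans mult_left_mono)
    have e2: "\<bar>?G z2 - ?G x - B (z2 - x)\<bar> \<le> e * (s * norm a)"
      using d0b[of z2] n2 n2' sab e by (auto intro: order_trans mult_left_mono)
    have Bdiff: "B (z1 - x) - B (z2 - x) = s * B b"
    proof -
      have "B (z1 - x) - B (z2 - x) = B ((z1 - x) - (z2 - x))" using blB by (simp add: linear_diff)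
      also have "(z1 - x) - (z2 - x) = s *\<^sub>R b" by (simp add: z1_def z2_def)
      also have "B (s *\<^sub>R b) = s * B b" using linear_scale[OF blB] by simp
      finally show ?thesis .
    qed
    have Delta: "f (x + s *\<^sub>R a + s *\<^sub>R b) - f (x + s *\<^sub>R a) - f (x + s *\<^sub>R b) + f x = s * (?G z1 - ?G z2)"
      using mv unfolding \<phi>_def z1_def z2_def by simp
    have "\<bar>s * (?G z1 - ?G z2) - s\<^sup>2 * B b\<bar> = s * \<bar>(?G z1 - ?G x - B (z1 - x)) - (?G z2 - ?G x - B (z2 - x))\<bar>"
    proof -
      have "s * (?G z1 - ?G z2) - s\<^sup>2 * B b = s * ((?G z1 - ?G x - B (z1 - x)) - (?G z2 - ?G x - B (z2 - x)))"
        using Bdiff by (simp add: power2_eq_square algebra_simps)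
      then show ?thesis using s by (simp add: abs_mult)
    qed
    also have "\<dots> \<le> s * (e * (s * (norm a + norm b)) + e * (s * norm a))"
      using e1 e2 s by (intro mult_left_mono) auto
    also have "\<dots> = e * s\<^sup>2 * (2 * norm a + norm b)" by (simp add: power2_eq_square algebra_simps)
    finally show ?thesis using Delta by simp
  qed
  ultimately show ?thesis by blast
qed

lemma sym2:
  fixes f :: "'a::real_normed_vector \<Rightarrow> real"
  assumes df: "\<And>z. (f has_derivative f' z) (at z)"
    and dB: "\<And>a. ((\<lambda>z. f' z a) has_derivative B a) (at x)"
  shows "B a b = B b a"
proof -
  have "B a b - B b a = 0"
  proof (rule zero_if_small[where C = "3 * (norm a + norm b)"])
    fix e :: real assume e: "e > 0"
    obtain d1 where d1: "d1 > 0" "\<And>s. 0 < s \<Longrightarrow> s < d1 \<Longrightarrow>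
      \<bar>(f (x + s *\<^sub>R a + s *\<^sub>R b) - f (x + s *\<^sub>R a) - f (x + s *\<^sub>R b) + f x) - s\<^sup>2 * B a b\<bar>
        \<le> e * s\<^sup>2 * (2 * norm a + norm b)"
      using sym2_est[OF df dB e, of a b] by blast
    obtain d2 where d2: "d2 > 0" "\<And>s. 0 < s \<Longrightarrow> s < d2 \<Longrightarrow>
      \<bar>(f (x + s *\<^sub>R b + s *\<^sub>R a) - f (x + s *\<^sub>R b) - f (x + s *\<^sub>R a) + f x) - s\<^sup>2 * B b a\<bar>
        \<le> e * s\<^sup>2 * (2 * norm b + norm a)"
      using sym2_est[OF df dB e, of b a] by blast
    define s where "s = min d1 d2 / 2"
    have s: "0 < s" "s < d1" "s < d2" using d1 d2 by (auto simp: s_def)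
    have eq: "x + s *\<^sub>R b + s *\<^sub>R a = x + s *\<^sub>R a + s *\<^sub>R b" by (simp add: algebra_simps)
    note A1 = d1(2)[OF s(1,2)]
    note A2 = d2(2)[OF s(1,3)]
    have "\<bar>s\<^sup>2 * (B a b - B b a)\<bar> \<le> e * s\<^sup>2 * (2 * norm a + norm b) + e * s\<^sup>2 * (2 * norm b + norm a)"
      using A1 A2 unfolding eq by (simp add: algebra_simps abs_le_iff)
    also have "\<dots> = s\<^sup>2 * (e * (3 * (norm a + norm b)))" by (simp add: algebra_simps)
    finally show "\<bar>B a b - B b a\<bar> \<le> e * (3 * (norm a + norm b))"
      using s by (simp add: abs_mult)
  qed simp
  then show ?thesis by simp
qed



lemma hd_D0: "higher_derivs g p D \<Longrightarrow> D 0 x h = g x"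
  unfolding higher_derivs_def by blast

lemma hd_dD: "higher_derivs g p D \<Longrightarrow> k < p \<Longrightarrow>
   ((\<lambda>z. D k z h) has_derivative (\<lambda>v. D (Suc k) x (h(k := v)))) (at x)"
  unfolding higher_derivs_def by blast

lemma D_local:
  assumes hd: "higher_derivs g p D"
  shows "k \<le> p \<Longrightarrow> (\<forall>i<k. h i = h' i) \<Longrightarrow> D k z h = D k z h'"
proof (induction k arbitrary: z)
  case 0
  then show ?case using hd_D0[OF hd] by simp
next
  case (Suc k)
  have eqf: "(\<lambda>z. D k z h) = (\<lambda>z. D k z h')" using Suc by auto
  
  have "(\<lambda>v. D (Suc k) z (h(k := v))) = (\<lambda>v. D (Suc k) z (h'(k := v)))"
    using hd_dD[OF hd, of k h z] hd_dD[OF hd, of k h' z] Suc.prems unfolding eqf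
    by (intro has_derivative_unique) auto
  from fun_cong[OF this, of "h k"] have "D (Suc k) z (h(k := h k)) = D (Suc k) z (h'(k := h k))" .
  moreover have "h'(k := h k) = h'" using Suc.prems by (auto simp: fun_eq_iff)
  ultimately show ?case by simp
qed

lemma upd_same: "i \<noteq> k \<Longrightarrow> (h(i := a))(k := h k) = h(i := a)"
  by (auto simp: fun_eq_iff)

lemma D_lin:
  assumes hd: "higher_derivs g p D"
  shows "k \<le> p \<Longrightarrow> i < k \<Longrightarrow> D k z (h(i := a + b)) = D k z (h(i := a)) + D k z (h(i := b))
           \<and> D k z (h(i := c *\<^sub>R a)) = c * D k z (h(i := a))"
proof (induction k arbitrary: z h i a b c)
  case 0
  then show ?case by simp
next
  case (Suc k)
  show ?case
  proof (cases "i = k")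
    case True
    have "linear (\<lambda>v. D (Suc k) z (h(k := v)))"
      using hd_dD[OF hd, of k h z] Suc.prems by (intro has_derivative_linear) auto
    from linear_add[OF this, of a b] linear_scale[OF this, of c a]
    show ?thesis unfolding True by (auto simp only: real_scaleR_def)
  next
    case False
    then have ik: "i < k" using Suc.prems by simp
    have kp: "k < p" using Suc.prems by simp
    have e1: "(\<lambda>z. D k z (h(i := a + b))) = (\<lambda>z. D k z (h(i := a)) + D k z (h(i := b)))"
      by (intro ext conjunct1[OF Suc.IH]) (use ik Suc.prems in auto)
    have "(\<lambda>v. D (Suc k) z ((h(i := a + b))(k := v))) = (\<lambda>v. D (Suc k) z ((h(i := a))(k := v)) + D (Suc k) z ((h(i := b))(k := v)))"
      using hd_dD[OF hd kp, of "h(i := a + b)" z] unfolding e1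
      by (intro has_derivative_unique) (auto intro: has_derivative_add hd_dD[OF hd kp])
    from fun_cong[OF this, of "h k"] have A: "D (Suc k) z (h(i := a + b)) = D (Suc k) z (h(i := a)) + D (Suc k) z (h(i := b))"
      using False by (simp add: upd_same)
    have e2: "(\<lambda>z. D k z (h(i := c *\<^sub>R a))) = (\<lambda>z. c * D k z (h(i := a)))"
      by (intro ext conjunct2[OF Suc.IH]) (use ik Suc.prems in auto)
    have "(\<lambda>v. D (Suc k) z ((h(i := c *\<^sub>R a))(k := v))) = (\<lambda>v. c * D (Suc k) z ((h(i := a))(k := v)))"
      using hd_dD[OF hd kp, of "h(i := c *\<^sub>R a)" z] unfolding e2
      by (intro has_derivative_unique) (auto intro: has_derivative_mult_right hd_dD[OF hd kp])
    from fun_cong[OF this, of "h k"] have B: "D (Suc k) z (h(i := c *\<^sub>R a)) = c * D (Suc k) z (h(i := a))"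
      using False by (simp add: upd_same)
    show ?thesis using A B unfolding fun_upd_def by blast
  qed
qed

lemma D_sym:
  assumes hd: "higher_derivs g p D"
  shows "k \<le> p \<Longrightarrow> Suc i < k \<Longrightarrow> D k z h = D k z (h(i := h (Suc i), Suc i := h i))"
proof (induction k arbitrary: z h i)
  case 0
  then show ?case by simp
next
  case (Suc k)
  have kp: "k < p" using Suc.prems by simp
  show ?case
  proof (cases "Suc i < k")
    case True
    have e: "(\<lambda>z. D k z h) = (\<lambda>z. D k z (h(i := h (Suc i), Suc i := h i)))"
      by (rule ext, rule Suc.IH) (use True Suc.prems in auto)
    have "(\<lambda>v. D (Suc k) z (h(k := v))) = (\<lambda>v. D (Suc k) z ((h(i := h (Suc i), Suc i := h i))(k := v)))"
      using hd_dD[OF hd kp, of h z] unfolding e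
      by (intro has_derivative_unique) (auto intro: hd_dD[OF hd kp])
    from fun_cong[OF this, of "h k"] have "D (Suc k) z (h(k := h k)) = D (Suc k) z ((h(i := h (Suc i), Suc i := h i))(k := h k))" .
    moreover have "(h(i := h (Suc i), Suc i := h i))(k := h k) = h(i := h (Suc i), Suc i := h i)"
      using True by (auto simp: fun_eq_iff)
    ultimately show ?thesis unfolding fun_upd_triv by (simp only:)
  next
    case False
    then have k: "k = Suc i" using Suc.prems by simp
    have "(\<lambda>a b. D (Suc (Suc i)) z ((h(i := a))(Suc i := b))) (h i) (h (Suc i))
        = (\<lambda>a b. D (Suc (Suc i)) z ((h(i := a))(Suc i := b))) (h (Suc i)) (h i)"
    proof (rule sym2[where f = "\<lambda>z'. D i z' h" and f' = "\<lambda>z' a. D (Suc i) z' (h(i := a))"])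
      show "((\<lambda>z'. D i z' h) has_derivative (\<lambda>a. D (Suc i) z' (h(i := a)))) (at z')" for z'
        using hd_dD[OF hd, of i h z'] kp k by simp
      show "((\<lambda>z'. D (Suc i) z' (h(i := a))) has_derivative (\<lambda>b. D (Suc (Suc i)) z ((h(i := a))(Suc i := b)))) (at z)" for a
        using hd_dD[OF hd, of "Suc i" "h(i := a)" z] kp k by simp
    qed
    moreover have "(h(i := h i))(Suc i := h (Suc i)) = h" by simp
    ultimately show ?thesis using k by (simp only:)
  qed
qed

lemma D_sym_slot:
  assumes hd: "higher_derivs g p D"
  shows "k \<le> p \<Longrightarrow> i < k \<Longrightarrow> D k z ((\<lambda>_. u)(i := v)) = D k z ((\<lambda>_. u)(0 := v))"
proof (induction i)
  case 0
  then show ?case by simp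
next
  case (Suc i)
  have "D k z ((\<lambda>_. u)(Suc i := v)) = D k z (((\<lambda>_. u)(Suc i := v))(i := ((\<lambda>_. u)(Suc i := v)) (Suc i), Suc i := ((\<lambda>_. u)(Suc i := v)) i))"
    by (rule D_sym[OF hd]) (use Suc.prems in auto)
  also have "((\<lambda>_. u)(Suc i := v))(i := ((\<lambda>_. u)(Suc i := v)) (Suc i), Suc i := ((\<lambda>_. u)(Suc i := v)) i) = (\<lambda>_. u)(i := v)"
    by (auto simp: fun_eq_iff)
  finally show ?case using Suc by simp
qed

definition fam :: "nat set \<Rightarrow> (nat \<Rightarrow> 'a::real_vector) \<Rightarrow> (nat \<Rightarrow> 'a) \<Rightarrow> (nat \<Rightarrow> 'a) \<Rightarrow> real \<Rightarrow> nat \<Rightarrow> 'a" where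
  "fam S a b c t l = (if l \<in> S then a l + t *\<^sub>R b l else c l)"

lemma fam_insert: "j \<notin> S \<Longrightarrow> fam (insert j S) a b c t = (fam S a b c t)(j := a j + t *\<^sub>R b j)"
  by (auto simp: fun_eq_iff fam_def)

lemma fam_upd: "j \<notin> S \<Longrightarrow> (fam S a b c t)(j := v) = fam S a b (c(j := v)) t"
  by (auto simp: fun_eq_iff fam_def)

lemma fam_upd0: "j \<notin> S \<Longrightarrow> (fam (insert j S) a b c 0)(j := v) = fam S a b (c(j := v)) 0"
  by (auto simp: fun_eq_iff fam_def)

lemma fam_upd1: "j \<notin> S \<Longrightarrow> i \<in> S \<Longrightarrow> (fam (insert j S) a b c 0)(i := v) = (fam S a b (c(j := a j)) 0)(i := v)"
  by (auto simp: fun_eq_iff fam_def)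

lemma D_multi:
  assumes hd: "higher_derivs g p D" and kp: "k \<le> p"
  shows "finite S \<Longrightarrow> S \<subseteq> {..<k} \<Longrightarrow>
    ((\<lambda>t. D k x (fam S a b c t)) has_real_derivative
       (\<Sum>i\<in>S. D k x ((fam S a b c 0)(i := b i)))) (at 0)"
proof (induction S arbitrary: c rule: finite_induct)
  case empty
  then show ?case by (simp add: fam_def)
next
  case (insert j S)
  have jk: "j < k" using insert.prems by auto
  have Sk: "S \<subseteq> {..<k}" using insert.prems by auto
  have split: "D k x (fam (insert j S) a b c t)
      = D k x (fam S a b (c(j := a j)) t) + t * D k x (fam S a b (c(j := b j)) t)" for t
  proof -
    note L1 = conjunct1[OF D_lin[OF hd kp jk, of x "fam S a b c t" "a j" "t *\<^sub>R b j"]]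
    note L2 = conjunct2[OF D_lin[OF hd kp jk, of x "fam S a b c t" "b j" _ t]]
    have "D k x (fam (insert j S) a b c t) = D k x ((fam S a b c t)(j := a j)) + t * D k x ((fam S a b c t)(j := b j))"
      unfolding fam_insert[OF insert.hyps(2)] L1 L2 ..
    then show ?thesis unfolding fam_upd[OF insert.hyps(2)] .
  qed
  have d1: "((\<lambda>t. D k x (fam S a b (c(j := a j)) t)) has_real_derivative (\<Sum>i\<in>S. D k x ((fam S a b (c(j := a j)) 0)(i := b i)))) (at 0)"
    by (rule insert.IH[OF Sk])
  obtain G2' where d2: "((\<lambda>t. D k x (fam S a b (c(j := b j)) t)) has_real_derivative G2') (at 0)"
    using insert.IH[OF Sk, of "c(j := b j)"] by blast
  define A where "A = D k x (fam S a b (c(j := b j)) 0)"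
  define B where "B = (\<Sum>i\<in>S. D k x ((fam S a b (c(j := a j)) 0)(i := b i)))"
  have X: "((\<lambda>t. D k x (fam S a b (c(j := a j)) t) + t * D k x (fam S a b (c(j := b j)) t)) has_real_derivative
      B + (1 * A + G2' * 0)) (at 0)"
    unfolding A_def B_def by (intro DERIV_add DERIV_mult d1 d2 DERIV_ident)
  have efun: "(\<lambda>t. D k x (fam (insert j S) a b c t)) = (\<lambda>t. D k x (fam S a b (c(j := a j)) t) + t * D k x (fam S a b (c(j := b j)) t))"
    by (rule ext) (rule split)
  have eA: "D k x ((fam (insert j S) a b c 0)(j := b j)) = A"
    unfolding A_def fam_upd0[OF insert.hyps(2)] ..
  have eB: "(\<Sum>i\<in>S. D k x ((fam (insert j S) a b c 0)(i := b i))) = B"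
    unfolding B_def by (intro sum.cong refl) (simp only: fam_upd1[OF insert.hyps(2)])
  have Sm: "B + (1 * A + G2' * 0) = (\<Sum>i\<in>insert j S. D k x ((fam (insert j S) a b c 0)(i := b i)))"
    unfolding sum.insert[OF insert.hyps] eA eB by simp
  have X2: "((\<lambda>t. D k x (fam (insert j S) a b c t)) has_real_derivative (B + (1 * A + G2' * 0))) (at 0)"
    using X by (simp only: efun)
  show ?case using X2 by (simp only: Sm)
qed



lemma grad_eq:
  fixes g :: "'a::euclidean_space \<Rightarrow> real"
  assumes hd: "higher_derivs g p D" and p: "0 < p"
  shows "gradient g y \<bullet> v = D 1 y ((\<lambda>_. u)(0 := v))"
proof -
  let ?hv = "(\<lambda>_. u)(0 := v)"
  define Dg where "Dg = (\<lambda>w. D 1 y (?hv(0 := w)))"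
  have dg0: "((\<lambda>z. D 0 z ?hv) has_derivative Dg) (at y)"
    unfolding Dg_def using hd_dD[OF hd p, of ?hv y] by simp
  have dg: "(g has_derivative Dg) (at y)"
    using dg0 hd_D0[OF hd] by simp
  have lin: "linear Dg" using dg by (rule has_derivative_linear)
  define vv where "vv = (\<Sum>b\<in>Basis. Dg b *\<^sub>R b)"
  have rep: "(\<lambda>h. vv \<bullet> h) = Dg"
  proof
    fix w
    have "vv \<bullet> w = (\<Sum>b\<in>Basis. Dg b * (b \<bullet> w))"
      unfolding vv_def by (simp add: inner_sum_left)
    also have "\<dots> = (\<Sum>b\<in>Basis. Dg ((w \<bullet> b) *\<^sub>R b))"
      by (intro sum.cong refl) (simp add: linear_scale[OF lin] inner_commute)
    also have "\<dots> = Dg (\<Sum>b\<in>Basis. (w \<bullet> b) *\<^sub>R b)"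
      by (simp add: linear_sum[OF lin])
    also have "\<dots> = Dg w" by (simp add: euclidean_representation)
    finally show "vv \<bullet> w = Dg w" .
  qed
  have "\<exists>vv. (g has_derivative (\<lambda>h. vv \<bullet> h)) (at y)" using dg rep by metis
  then have "(g has_derivative (\<lambda>h. gradient g y \<bullet> h)) (at y)"
    unfolding gradient_def by (rule someI_ex)
  then have "(\<lambda>h. gradient g y \<bullet> h) = Dg" using dg by (rule has_derivative_unique)
  then have "gradient g y \<bullet> v = Dg v" by metis
  then show ?thesis unfolding Dg_def by simp
qed

lemma norm_pow_deriv:
  fixes u v :: "'a::real_inner"
  assumes n: "n \<ge> 1"
  shows "((\<lambda>t. norm (u + t *\<^sub>R v) ^ Suc n) has_real_derivative (real (Suc n) * norm u ^ (n - 1) * (u \<bullet> v))) (at 0)"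
proof (cases "u = 0")
  case True
  obtain m where m: "n = Suc m" using n by (cases n) auto
  have "((\<lambda>t. norm (u + t *\<^sub>R v) ^ Suc n) has_real_derivative 0) (at 0)"
    unfolding CARAT_DERIV
  proof (intro exI conjI allI)
    fix z :: real
    show "norm (u + z *\<^sub>R v) ^ Suc n - norm (u + 0 *\<^sub>R v) ^ Suc n = (z * \<bar>z\<bar> ^ m * norm v ^ Suc n) * (z - 0)"
    proof -
      have e1: "norm (u + z *\<^sub>R v) ^ Suc n = \<bar>z\<bar> ^ Suc (Suc m) * norm v ^ Suc n"
        using True m by (simp add: power_mult_distrib)
      have e2: "\<bar>z\<bar> ^ Suc (Suc m) = (\<bar>z\<bar> * \<bar>z\<bar>) * \<bar>z\<bar> ^ m"
        by (simp only: power_Suc mult.assoc)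
      have e3: "\<bar>z\<bar> * \<bar>z\<bar> = z * z" by (rule abs_mult_self_eq)
      show ?thesis using True unfolding e1 e2 e3 by (simp add: mult_ac)
    qed
    show "isCont (\<lambda>z::real. z * \<bar>z\<bar> ^ m * norm v ^ Suc n) 0"
      by (intro continuous_intros)
  qed simp
  then show ?thesis using True by simp
next
  case False
  have h1: "((\<lambda>t. u + t *\<^sub>R v) has_derivative (\<lambda>d. d *\<^sub>R v)) (at 0)"
    by (auto intro!: derivative_eq_intros)
  have h2: "(norm has_derivative (\<lambda>h. h \<bullet> sgn u)) (at (u + 0 *\<^sub>R v))"
    using has_derivative_norm[OF False] by simp
  have "((\<lambda>t. norm (u + t *\<^sub>R v)) has_derivative (\<lambda>d. (d *\<^sub>R v) \<bullet> sgn u)) (at 0)"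
    using has_derivative_compose[OF h1 h2] by simp
  then have dn: "((\<lambda>t. norm (u + t *\<^sub>R v)) has_real_derivative (v \<bullet> sgn u)) (at 0)"
    unfolding has_field_derivative_def
    by (rule has_derivative_eq_rhs) (auto simp: fun_eq_iff)
  have "((\<lambda>t. norm (u + t *\<^sub>R v) ^ Suc n) has_real_derivative of_nat (Suc n) * ((v \<bullet> sgn u) * norm (u + 0 *\<^sub>R v) ^ (Suc n - Suc 0))) (at 0)"
    by (rule DERIV_power[OF dn])
  moreover have "of_nat (Suc n) * ((v \<bullet> sgn u) * norm (u + 0 *\<^sub>R v) ^ (Suc n - Suc 0)) = real (Suc n) * norm u ^ (n - 1) * (u \<bullet> v)"
  proof -
    obtain m where m: "n = Suc m" using n by (cases n) auto
    have H: "norm u * (v \<bullet> sgn u) = u \<bullet> v" using False by (simp add: sgn_div_norm inner_commute)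
    have "(v \<bullet> sgn u) * norm u ^ Suc m = (norm u * (v \<bullet> sgn u)) * norm u ^ m" by (simp add: mult_ac)
    then have "(v \<bullet> sgn u) * norm u ^ Suc m = (u \<bullet> v) * norm u ^ m" unfolding H .
    then show ?thesis using m by (simp add: mult_ac)
  qed
  ultimately show ?thesis by (simp only:)
qed

lemma fam_diag: "k \<le> p \<Longrightarrow> higher_derivs g p D \<Longrightarrow> D k x (fam {..<k} (\<lambda>_. u) (\<lambda>_. v) (\<lambda>_. u) t) = D k x (\<lambda>_. u + t *\<^sub>R v)"
  by (rule D_local) (auto simp: fam_def)

lemma diag_deriv:
  assumes hd: "higher_derivs g p D" and kp: "k \<le> p"
  shows "((\<lambda>t. D k x (\<lambda>_. u + t *\<^sub>R v)) has_real_derivative real k * D k x ((\<lambda>_. u)(0 := v))) (at 0)"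
proof -
  have "((\<lambda>t. D k x (fam {..<k} (\<lambda>_. u) (\<lambda>_. v) (\<lambda>_. u) t)) has_real_derivative
       (\<Sum>i\<in>{..<k}. D k x ((fam {..<k} (\<lambda>_. u) (\<lambda>_. v) (\<lambda>_. u) 0)(i := v)))) (at 0)"
    using D_multi[OF hd kp, of "{..<k}" x "\<lambda>_. u" "\<lambda>_. v" "\<lambda>_. u"] by simp
  moreover have "fam {..<k} (\<lambda>_. u) (\<lambda>_. v) (\<lambda>_. u) 0 = (\<lambda>_. u)" by (auto simp: fam_def fun_eq_iff)
  moreover have "(\<Sum>i\<in>{..<k}. D k x (((\<lambda>_. u))(i := v))) = real k * D k x ((\<lambda>_. u)(0 := v))"
  proof -
    have "(\<Sum>i\<in>{..<k}. D k x (((\<lambda>_. u))(i := v))) = (\<Sum>i\<in>{..<k}. D k x ((\<lambda>_. u)(0 := v)))"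
      by (intro sum.cong refl D_sym_slot[OF hd kp]) auto
    then show ?thesis by simp
  qed
  moreover have "(\<lambda>t. D k x (fam {..<k} (\<lambda>_. u) (\<lambda>_. v) (\<lambda>_. u) t)) = (\<lambda>t. D k x (\<lambda>_. u + t *\<^sub>R v))"
    using fam_diag[OF kp hd] by auto
  ultimately show ?thesis by simp
qed



lemma taylor_dir:
  fixes u v :: "'a::euclidean_space"
  assumes hd: "higher_derivs g p D" and lip: "pth_deriv_lipschitz p D Lp" and p: "1 \<le> p"
  shows "\<bar>D 1 (x + u) ((\<lambda>_. u)(0 := v)) - (\<Sum>j\<le>p - 1. D (Suc j) x ((\<lambda>_. u)(0 := v)) / fact j)\<bar>
          \<le> Lp * norm u ^ p * norm v / fact p"
proof -
  let ?hv = "(\<lambda>_. u)(0 := v)"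
  obtain m where m: "p = Suc m" using p by (cases p) auto
  define f where "f j s = D (Suc j) (x + s *\<^sub>R u) ?hv" for j s
  have der: "(f j has_real_derivative f (Suc j) s) (at s)" if j: "j < m" for j s
  proof -
    have jp: "Suc j < p" "Suc (Suc j) \<le> p" using j m by auto
    have h1: "((\<lambda>s. x + s *\<^sub>R u) has_derivative (\<lambda>d. d *\<^sub>R u)) (at s)"
      by (auto intro!: derivative_eq_intros)
    note h2 = hd_dD[OF hd jp(1), of ?hv "x + s *\<^sub>R u"]
    have "((\<lambda>s. D (Suc j) (x + s *\<^sub>R u) ?hv) has_derivative (\<lambda>d. D (Suc (Suc j)) (x + s *\<^sub>R u) (?hv(Suc j := d *\<^sub>R u)))) (at s)"
      using has_derivative_compose[OF h1 h2] by simp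
    moreover have "(\<lambda>d. D (Suc (Suc j)) (x + s *\<^sub>R u) (?hv(Suc j := d *\<^sub>R u))) = (*) (f (Suc j) s)"
    proof
      fix d
      have "D (Suc (Suc j)) (x + s *\<^sub>R u) (?hv(Suc j := d *\<^sub>R u)) = d * D (Suc (Suc j)) (x + s *\<^sub>R u) (?hv(Suc j := u))"
        using conjunct2[OF D_lin[OF hd jp(2), of "Suc j" "x + s *\<^sub>R u" ?hv u _ d]] by simp
      moreover have "?hv(Suc j := u) = ?hv" by (auto simp: fun_eq_iff)
      ultimately show "D (Suc (Suc j)) (x + s *\<^sub>R u) (?hv(Suc j := d *\<^sub>R u)) = f (Suc j) s * d"
        unfolding f_def by simp
    qed
    ultimately show ?thesis unfolding has_field_derivative_def f_def by simp
  qed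
  have lipb: "\<bar>f m s - f m 0\<bar> \<le> (Lp * norm u ^ p * norm v) * s" if s: "0 \<le> s" "s \<le> 1" for s
  proof -
    have fm: "f m s = D p (x + s *\<^sub>R u) ?hv" "f m 0 = D p x ?hv" unfolding f_def m by simp_all
    have "\<bar>f m s - f m 0\<bar> \<le> Lp * norm ((x + s *\<^sub>R u) - x) * (\<Prod>i<p. norm (?hv i))"
      using lip unfolding pth_deriv_lipschitz_def fm by blast
    also have "(\<Prod>i<p. norm (?hv i)) = norm v * norm u ^ m"
      unfolding m prod.lessThan_Suc_shift by simp
    also have "norm ((x + s *\<^sub>R u) - x) = s * norm u" using s by simp
    finally show ?thesis unfolding m by (simp add: mult_ac)
  qed
  have "\<bar>f 0 1 - (\<Sum>j\<le>m. f j 0 * 1 ^ j / fact j)\<bar> \<le> (Lp * norm u ^ p * norm v) * 1 ^ Suc m / fact (Suc m)"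
    by (rule taylor_rem[of m f]) (use der lipb in auto)
  then show ?thesis unfolding f_def m by simp
qed

lemma first_order:
  fixes y x v :: "'a::euclidean_space"
  assumes hd: "higher_derivs g p D" and p: "1 \<le> p"
    and min: "\<And>z. taylor_approx p D y x + cc * norm (y - x) ^ (p + 1) \<le> taylor_approx p D z x + cc * norm (z - x) ^ (p + 1)"
  shows "(\<Sum>j\<le>p - 1. D (Suc j) x ((\<lambda>_. y - x)(0 := v)) / fact j)
          + cc * (real (Suc p) * norm (y - x) ^ (p - 1) * ((y - x) \<bullet> v)) = 0"
proof -
  define u where "u = y - x"
  let ?hv = "(\<lambda>_. u)(0 := v)"
  define M where "M t = (\<Sum>k\<le>p. D k x (\<lambda>_. u + t *\<^sub>R v) / fact k) + cc * norm (u + t *\<^sub>R v) ^ Suc p" for t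
  have Mt: "M t = taylor_approx p D (y + t *\<^sub>R v) x + cc * norm (y + t *\<^sub>R v - x) ^ (p + 1)" for t
  proof -
    have e: "y + t *\<^sub>R v - x = u + t *\<^sub>R v" by (simp add: u_def algebra_simps)
    show ?thesis unfolding M_def taylor_approx_def e by simp
  qed
  have M0: "M 0 = taylor_approx p D y x + cc * norm (y - x) ^ (p + 1)" using Mt[of 0] by simp
  have Mmin: "M 0 \<le> M t" for t using min[of "y + t *\<^sub>R v"] M0 Mt[of t] by linarith
  have dM: "(M has_real_derivative (\<Sum>k\<le>p. real k * D k x ?hv / fact k) + cc * (real (Suc p) * norm u ^ (p - 1) * (u \<bullet> v))) (at 0)"
    unfolding M_def[abs_def]
    by (intro DERIV_add DERIV_sum DERIV_cdivide DERIV_cmult diag_deriv[OF hd] norm_pow_deriv p) auto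
  have l0: "(\<Sum>k\<le>p. real k * D k x ?hv / fact k) + cc * (real (Suc p) * norm u ^ (p - 1) * (u \<bullet> v)) = 0"
    by (rule DERIV_local_min[OF dM, of 1]) (use Mmin in auto)
  obtain m where m: "p = Suc m" using p by (cases p) auto
  have "(\<Sum>k\<le>p. real k * D k x ?hv / fact k) = (\<Sum>j\<le>p - 1. D (Suc j) x ?hv / fact j)"
  proof -
    have "(\<Sum>k\<le>p. real k * D k x ?hv / fact k) = (\<Sum>j\<le>m. real (Suc j) * D (Suc j) x ?hv / fact (Suc j))"
      unfolding m sum.atMost_Suc_shift by simp
    also have "\<dots> = (\<Sum>j\<le>m. D (Suc j) x ?hv / fact j)"
    proof (intro sum.cong refl)
      fix j
      have "real (Suc j) * D (Suc j) x ?hv / fact (Suc j) = (real (Suc j) * D (Suc j) x ?hv) / (real (Suc j) * fact j)"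
        by (simp only: fact_Suc of_nat_mult)
      also have "\<dots> = D (Suc j) x ?hv / fact j"
        by (rule mult_divide_mult_cancel_left) simp
      finally show "real (Suc j) * D (Suc j) x ?hv / fact (Suc j) = D (Suc j) x ?hv / fact j" .
    qed
    finally show ?thesis using m by simp
  qed
  with l0 show ?thesis unfolding u_def by simp
qed



lemma alg_aux:
  fixes a S F q r Lp :: real
  assumes "a \<noteq> 0" "S \<noteq> 0" "F \<noteq> 0"
  shows "inverse a * (Lp / S) * (S * a / F * q) * r = Lp * (q * r) / F"
  using assms by (simp add: field_simps)

theorem mainTheorem19:
  fixes g :: "'a::euclidean_space \<Rightarrow> real"
    and D :: "nat \<Rightarrow> 'a \<Rightarrow> (nat \<Rightarrow> 'a) \<Rightarrow> real"
    and T :: "'a \<Rightarrow> 'a"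
    and p :: nat and Lp L :: real
  assumes "p \<ge> 1"
    and "higher_derivs g p D"
    and "Lp > 0"
    and "pth_deriv_lipschitz p D Lp"
    and "L \<ge> 0"
    and "\<And>x z. taylor_approx p D (T x) x + (Lp + L) / fact p * norm (T x - x) ^ (p + 1)
               \<le> taylor_approx p D z x + (Lp + L) / fact p * norm (z - x) ^ (p + 1)"
  shows "approx_prox_oracle g (\<lambda>s. (Lp + L) * (p + 1) / fact p * s ^ (p - 1))
           (inverse (1 + p) * inverse (1 + L / Lp)) 0 T"
proof -
  have main: "norm (gradient g (T x) + ((Lp + L) * (1 + real p) / fact p * norm (T x - x) ^ (p - 1)) *\<^sub>R (T x - x))
      \<le> inverse (1 + real p) * inverse (1 + L / Lp) * ((Lp + L) * (1 + real p) / fact p * norm (T x - x) ^ (p - 1)) * norm (T x - x) + 0" for x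
  proof -
  note p = assms(1) and hd = assms(2) and Lp = assms(3) and lip = assms(4) and L = assms(5)
  define y where "y = T x"
  define u where "u = y - x"
  define r where "r = norm u"
  define cc where "cc = (Lp + L) / fact p"
  define w where "w = (Lp + L) * (1 + real p) / fact p * r ^ (p - 1)"
  define Kb where "Kb = Lp * r ^ p / fact p"
  have wcc: "w = cc * real (Suc p) * r ^ (p - 1)" unfolding w_def cc_def by simp
  have key: "\<bar>gradient g y \<bullet> v + w * (u \<bullet> v)\<bar> \<le> Kb * norm v" for v
  proof -
    let ?hv = "(\<lambda>_. u)(0 := v)"
    have g1: "gradient g y \<bullet> v = D 1 (x + u) ?hv"
      using grad_eq[OF hd, of y v u] p unfolding u_def by simp
    have fo: "(\<Sum>j\<le>p - 1. D (Suc j) x ?hv / fact j) + cc * (real (Suc p) * r ^ (p - 1) * (u \<bullet> v)) = 0"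
      using first_order[OF hd p, of "T x" x cc v] assms(6)[of x] unfolding cc_def u_def y_def r_def by blast
    note td = taylor_dir[OF hd lip p, of x u v]
    have "gradient g y \<bullet> v + w * (u \<bullet> v) = D 1 (x + u) ?hv - (\<Sum>j\<le>p - 1. D (Suc j) x ?hv / fact j)"
      using g1 fo unfolding wcc by (simp add: algebra_simps)
    with td show ?thesis unfolding Kb_def r_def by (simp add: mult_ac)
  qed
  have Kb0: "Kb \<ge> 0" unfolding Kb_def r_def using Lp by simp
  define N where "N = gradient g y + w *\<^sub>R u"
  have "norm N \<le> Kb"
  proof (cases "N = 0")
    case True then show ?thesis using Kb0 by simp
  next
    case False
    have "norm N * norm N = N \<bullet> N" by (simp add: power2_eq_square[symmetric] power2_norm_eq_inner)
    also have "\<dots> = gradient g y \<bullet> N + w * (u \<bullet> N)" unfolding N_def by (simp add: inner_add_left)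
    also have "\<dots> \<le> Kb * norm N" using key[of N] by simp
    finally have "norm N * norm N \<le> Kb * norm N" .
    then show ?thesis using False by simp
  qed
  moreover have "inverse (1 + real p) * inverse (1 + L / Lp) * w * r + 0 = Kb"
  proof -
    obtain m where m: "p = Suc m" using p by (cases p) auto
    have e1: "inverse (1 + L / Lp) = Lp / (Lp + L)" using Lp L by (simp add: field_simps)
    have r1: "r ^ (p - 1) * r = r ^ p" using m by simp
    have S: "Lp + L > 0" "1 + real p > 0" "fact p > (0::real)" using Lp L by auto
    have "inverse (1 + real p) * (Lp / (Lp + L)) * ((Lp + L) * (1 + real p) / fact p * r ^ (p - 1)) * r
        = Lp * (r ^ (p - 1) * r) / fact p"
      using alg_aux[of "1 + real p" "Lp + L" "fact p" Lp "r ^ (p - 1)" r] S by simp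
    then show ?thesis unfolding w_def Kb_def e1 r1 by simp
  qed
  ultimately show ?thesis
    unfolding N_def w_def r_def u_def y_def by simp
  qed
  show ?thesis unfolding approx_prox_oracle_def Let_def using main by simp
qed


end
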